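(* Suppose $\mathrm{edim}(R) = n \ge 2$ and let $w_1 < w_2 < \cdots < w_N$ be the minimal generators of the numerical semigroup $V(R)$. Then $a_1 = w_1$, $a_2 = w_2$, and $$\{a_1, \ldots, a_n\} \subseteq \{w_1, \ldots, w_N\}.$$ If $R$ is a numerical semigroup ring, i.e. $R = k[[t^{w_1}, \ldots, t^{w_N}]]$, then $\{a_1, \ldots, a_n\} = \{w_1, \ldots, w_N\}$.
   Context: Let $k$ be a field and let $(R,\mathfrak m)$ be a complete local noetherian domain of dimension $1$ containing $k$ with $R/\mathfrak m = k$, with normalization $\overline R$ having residue field $k$, so $\overline R = k[[t]]$ and $R \subseteq k[[t]]$ is finite birational. Let $v$ be the $t$-adic valuation. For $A \subseteq k((t))$ let $v(A) = \{v(f): f\in A\setminus\{0\}\}$; $V(R) = v(R)$ is the value semigroup of $R$ (a numerical semigroup). The Herzog–Kunz sequence of $R$ is $v(\mathfrak m)\setminus v(\mathfrak m^2)$ listed increasingly as $a_1 < \cdots < a_n$, where $n = \mathrm{edim}(R) = \dim_k\mathfrak m/\mathfrak m^2$. *)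

theory Defs
  imports "HOL-Computational_Algebra.Formal_Power_Series"
begin

text \<open>Setting: k is the field 'a (k = UNIV), the normalization is k[[t]] = 'a fps,
  and R is a subring of k[[t]] containing k.\<close>

definition k_subalgebra :: "('a::field) fps set \<Rightarrow> bool" where
  "k_subalgebra R \<longleftrightarrow> (\<forall>c. fps_const c \<in> R) \<and>
     (\<forall>f\<in>R. \<forall>g\<in>R. f + g \<in> R \<and> f * g \<in> R \<and> - f \<in> R)"

definition normalization_finite :: "('a::field) fps set \<Rightarrow> bool" where
  "normalization_finite R \<longleftrightarrow>
     (\<exists>gs :: 'a fps list. \<forall>f :: 'a fps. \<exists>rs. length rs = length gs \<and> set rs \<subseteq> R \<and>
        f = (\<Sum>i<length gs. rs ! i * gs ! i))"

definition birational :: "('a::field) fps set \<Rightarrow> bool" where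
  "birational R \<longleftrightarrow> (\<forall>f :: 'a fps. \<exists>a\<in>R. \<exists>b\<in>R. b \<noteq> 0 \<and> f * b = a)"

definition max_ideal :: "('a::field) fps set \<Rightarrow> 'a fps set" where
  "max_ideal R = {f \<in> R. \<not> (\<exists>g\<in>R. f * g = 1)}"

definition ideal_prod :: "('a::comm_ring_1) fps set \<Rightarrow> 'a fps set \<Rightarrow> 'a fps set" where
  "ideal_prod I J = {sum_list (map (\<lambda>(x, y). x * y) ps) | ps. set ps \<subseteq> I \<times> J}"

definition vals :: "('a::zero) fps set \<Rightarrow> nat set" where
  "vals A = subdegree ` (A - {0})"

text \<open>Embedding dimension: dim_k (m / m^2) = n, witnessed by a basis of n classes.\<close>
definition has_edim :: "('a::field) fps set \<Rightarrow> nat \<Rightarrow> bool" where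
  "has_edim R n \<longleftrightarrow> (let m = max_ideal R; m2 = ideal_prod m m in
     \<exists>fs :: 'a fps list. length fs = n \<and> set fs \<subseteq> m \<and>
       (\<forall>g\<in>m. \<exists>cs :: 'a list. length cs = n \<and>
            g - (\<Sum>i<n. fps_const (cs ! i) * fs ! i) \<in> m2) \<and>
       (\<forall>cs :: 'a list. length cs = n \<longrightarrow>
            (\<Sum>i<n. fps_const (cs ! i) * fs ! i) \<in> m2 \<longrightarrow> (\<forall>i<n. cs ! i = 0)))"

definition min_gens :: "nat set \<Rightarrow> nat set" where
  "min_gens S = {s \<in> S. 0 < s \<and> \<not> (\<exists>x\<in>S. \<exists>y\<in>S. 0 < x \<and> 0 < y \<and> s = x + y)}"

definition HK_set :: "('a::field) fps set \<Rightarrow> nat set" where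
  "HK_set R = vals (max_ideal R) - vals (ideal_prod (max_ideal R) (max_ideal R))"

text \<open>Semigroup ring k[[S]] = k[[t^s : s \<in> S]]: power series supported on S.\<close>
definition semigroup_ring :: "nat set \<Rightarrow> ('a::field) fps set" where
  "semigroup_ring S = {f. \<forall>i. fps_nth f i \<noteq> 0 \<longrightarrow> i \<in> S}"

end

theory Submission
  imports Defs
begin

unbundle fps_syntax



definition low :: "nat \<Rightarrow> ('a::zero) fps \<Rightarrow> bool" where
  "low k f \<longleftrightarrow> (\<forall>i<k. f $ i = 0)"

lemma low_mono: "low k f \<Longrightarrow> j \<le> k \<Longrightarrow> low j f"
  by (auto simp: low_def)

lemma low_add: "low k (f::'a::monoid_add fps) \<Longrightarrow> low k g \<Longrightarrow> low k (f + g)"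
  by (auto simp: low_def)

lemma low_diff: "low k (f::'a::ab_group_add fps) \<Longrightarrow> low k g \<Longrightarrow> low k (f - g)"
  by (auto simp: low_def)

lemma low_0 [simp]: "low 0 f" "low k 0"
  by (auto simp: low_def)

lemma low_mult:
  fixes f g :: "'a::comm_ring_1 fps"
  assumes "low a f" "low b g" shows "low (a + b) (f * g)"
  unfolding low_def
proof (intro allI impI)
  fix i assume i: "i < a + b"
  have "(f * g) $ i = (\<Sum>j=0..i. f$j * g$(i - j))" by (rule fps_mult_nth)
  also have "\<dots> = 0"
  proof (rule sum.neutral, intro ballI)
    fix j assume "j \<in> {0..i}"
    then have "j < a \<or> i - j < b" using i by auto
    then show "f$j * g$(i-j) = 0" using assms by (auto simp: low_def)
  qed
  finally show "(f * g) $ i = 0" .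
qed

lemma low_power:
  fixes f :: "'a::comm_ring_1 fps"
  assumes "low a f" shows "low (q * a) (f ^ q)"
proof (induction q)
  case 0 then show ?case by simp
next
  case (Suc q)
  then show ?case using low_mult[OF assms Suc.IH] by simp
qed

lemma low_subdegree: "low k f \<longleftrightarrow> f = 0 \<or> k \<le> subdegree f"
proof
  assume "low k f"
  then show "f = 0 \<or> k \<le> subdegree f"
    using nth_subdegree_nonzero[of f] by (metis low_def not_le)
next
  assume "f = 0 \<or> k \<le> subdegree f"
  then show "low k f" by (auto simp: low_def intro: nth_less_subdegree_zero)
qed

lemma sa_const: "k_subalgebra R \<Longrightarrow> fps_const c \<in> R"
  by (simp add: k_subalgebra_def)
lemma sa_0: "k_subalgebra R \<Longrightarrow> 0 \<in> R"
  using sa_const[of R 0] by simp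
lemma sa_1: "k_subalgebra R \<Longrightarrow> 1 \<in> R"
  using sa_const[of R 1] by simp
lemma sa_add: "k_subalgebra R \<Longrightarrow> f \<in> R \<Longrightarrow> g \<in> R \<Longrightarrow> f + g \<in> R"
  by (simp add: k_subalgebra_def)
lemma sa_mult: "k_subalgebra R \<Longrightarrow> f \<in> R \<Longrightarrow> g \<in> R \<Longrightarrow> f * g \<in> R"
  by (simp add: k_subalgebra_def)
lemma sa_uminus: "k_subalgebra R \<Longrightarrow> f \<in> R \<Longrightarrow> - f \<in> R"
  by (simp add: k_subalgebra_def)
lemma sa_diff: "k_subalgebra R \<Longrightarrow> f \<in> R \<Longrightarrow> g \<in> R \<Longrightarrow> f - g \<in> R"
  using sa_add[of R f "- g"] sa_uminus[of R g] by simp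
lemma sa_power: "k_subalgebra R \<Longrightarrow> f \<in> R \<Longrightarrow> f ^ q \<in> R"
  by (induction q) (auto intro: sa_1 sa_mult)
lemma sa_sum: "k_subalgebra R \<Longrightarrow> (\<And>i. i \<in> A \<Longrightarrow> F i \<in> R) \<Longrightarrow> sum F A \<in> R"
  by (induction A rule: infinite_finite_induct) (auto intro: sa_0 sa_add)
lemma sa_prod: "k_subalgebra R \<Longrightarrow> (\<And>i. i \<in> A \<Longrightarrow> F i \<in> R) \<Longrightarrow> prod F A \<in> R"
  by (induction A rule: infinite_finite_induct) (auto intro: sa_1 sa_mult)

section \<open>Conductor\<close>

lemma conductor:
  fixes R :: "('a::field) fps set"
  assumes sa: "k_subalgebra R" and nf: "normalization_finite R" and br: "birational R"
  shows "\<exists>N. \<forall>f. low N f \<longrightarrow> f \<in> R"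
proof -
  obtain gs :: "'a fps list" where gs: "\<And>f. \<exists>rs. length rs = length gs \<and> set rs \<subseteq> R \<and>
        f = (\<Sum>i<length gs. rs ! i * gs ! i)"
    using nf unfolding normalization_finite_def by blast
  have "\<forall>i. \<exists>a b. i < length gs \<longrightarrow> a \<in> R \<and> b \<in> R \<and> b \<noteq> 0 \<and> gs ! i * b = a"
    using br unfolding birational_def by blast
  then obtain A B where AB: "\<And>i. i < length gs \<Longrightarrow> A i \<in> R \<and> B i \<in> R \<and> B i \<noteq> 0 \<and> gs ! i * B i = A i"
    by metis
  define beta where "beta = (\<Prod>i<length gs. B i)"
  have beta0: "beta \<noteq> 0" unfolding beta_def using AB by simp
  have bg: "beta * gs ! i \<in> R" if i: "i < length gs" for i
  proof -
    have "beta = B i * (\<Prod>j\<in>{..<length gs} - {i}. B j)"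
      unfolding beta_def using i by (simp add: prod.remove)
    then have "beta * gs ! i = A i * (\<Prod>j\<in>{..<length gs} - {i}. B j)"
      using AB[OF i] by (simp add: algebra_simps)
    moreover have "A i \<in> R" using AB[OF i] by blast
    ultimately show ?thesis using AB sa by (auto intro!: sa_mult sa_prod)
  qed
  have bf: "beta * f \<in> R" for f
  proof -
    obtain rs where rs: "length rs = length gs" "set rs \<subseteq> R" "f = (\<Sum>i<length gs. rs ! i * gs ! i)"
      using gs by blast
    have "beta * f = (\<Sum>i<length gs. rs ! i * (beta * gs ! i))"
      using rs(3) by (simp add: sum_distrib_left algebra_simps)
    also have "\<dots> \<in> R"
    proof (rule sa_sum[OF sa])
      fix i assume "i \<in> {..<length gs}"
      then have i: "i < length gs" by simp
      then have "rs ! i \<in> R" using rs by (auto simp: subset_iff)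
      then show "rs ! i * (beta * gs ! i) \<in> R" using bg[OF i] sa_mult[OF sa] by blast
    qed
    finally show ?thesis .
  qed
  define N where "N = subdegree beta"
  define u where "u = fps_shift N beta"
  have u0: "u $ 0 \<noteq> 0" unfolding u_def N_def using beta0 by simp
  have bdec: "beta = u * fps_X ^ N" unfolding u_def N_def by (rule subdegree_decompose)
  have "f \<in> R" if "low N f" for f
  proof (cases "f = 0")
    case True then show ?thesis using sa_0[OF sa] by simp
  next
    case False
    then have "N \<le> subdegree f" using that low_subdegree by blast
    then have fd: "f = fps_shift N f * fps_X ^ N" by (rule subdegree_decompose')
    have "beta * (inverse u * fps_shift N f) = (u * inverse u) * (fps_shift N f * fps_X ^ N)"
      unfolding bdec by (simp add: algebra_simps)
    also have "\<dots> = f" using inverse_mult_eq_1'[OF u0] fd[symmetric] by simp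
    finally show ?thesis using bf by metis
  qed
  then show ?thesis by blast
qed


section \<open>Units and maximal ideal\<close>

lemma unit_in:
  fixes R :: "('a::field) fps set"
  assumes sa: "k_subalgebra R" and cond: "\<forall>f. low N f \<longrightarrow> f \<in> R"
    and f: "f \<in> R" "f $ 0 \<noteq> 0"
  shows "\<exists>g\<in>R. f * g = 1"
proof -
  define c where "c = f $ 0"
  define y where "y = 1 - fps_const (inverse c) * f"
  have yR: "y \<in> R" unfolding y_def using sa f by (auto intro: sa_diff sa_1 sa_mult sa_const)
  have y0: "y $ 0 = 0" unfolding y_def c_def using f by simp
  have c0: "c \<noteq> 0" using f c_def by simp
  have "1 - y = fps_const (inverse c) * f" by (simp add: y_def)
  then have "fps_const c * (1 - y) = (fps_const c * fps_const (inverse c)) * f" by (simp only: mult.assoc)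
  also have "fps_const c * fps_const (inverse c) = 1" using c0 by (simp add: fps_const_mult[symmetric])
  finally have fy: "f = fps_const c * (1 - y)" by simp
  have u0: "(1 - y) $ 0 \<noteq> 0" using y0 by simp
  define g where "g = fps_const (inverse c) * ((\<Sum>i<N. y ^ i) + y ^ N * inverse (1 - y))"
  have "low (N * 1) (y ^ N)" by (rule low_power) (use y0 in \<open>simp add: low_def\<close>)
  then have "low (N + 0) (y ^ N * inverse (1 - y))" by (intro low_mult) auto
  then have "y ^ N * inverse (1 - y) \<in> R" using cond by simp
  moreover have "(\<Sum>i<N. y ^ i) \<in> R" using sa yR by (auto intro: sa_sum sa_power)
  ultimately have gR: "g \<in> R" unfolding g_def using sa by (auto intro: sa_mult sa_add sa_const)
  have "f * g = (fps_const c * fps_const (inverse c)) * ((1 - y) * ((\<Sum>i<N. y ^ i) + y ^ N * inverse (1 - y)))"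
    unfolding fy g_def by (simp only: ac_simps)
  also have "fps_const c * fps_const (inverse c) = 1" using c0 by (simp add: fps_const_mult[symmetric])
  also have "(1 - y) * ((\<Sum>i<N. y ^ i) + y ^ N * inverse (1 - y)) = (1 - y) * (\<Sum>i<N. y ^ i) + y ^ N * ((1 - y) * inverse (1 - y))"
    by (simp only: distrib_left ac_simps)
  also have "\<dots> = 1" using inverse_mult_eq_1'[OF u0] by (simp flip: one_diff_power_eq)
  finally show ?thesis using gR by auto
qed

lemma max_ideal_char:
  fixes R :: "('a::field) fps set"
  assumes sa: "k_subalgebra R" and cond: "\<forall>f. low N f \<longrightarrow> f \<in> R"
  shows "f \<in> max_ideal R \<longleftrightarrow> f \<in> R \<and> f $ 0 = 0"
proof
  assume "f \<in> max_ideal R"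
  then show "f \<in> R \<and> f $ 0 = 0" using unit_in[OF sa cond] unfolding max_ideal_def by blast
next
  assume a: "f \<in> R \<and> f $ 0 = 0"
  have "f * g \<noteq> 1" for g
  proof
    assume "f * g = 1"
    then have "(f * g) $ 0 = 1" by simp
    then show False using a by simp
  qed
  then show "f \<in> max_ideal R" using a unfolding max_ideal_def by blast
qed

lemma ideal_prod_induct:
  assumes "h \<in> ideal_prod I J" "P 0" "\<And>x y. P x \<Longrightarrow> P y \<Longrightarrow> P (x + y)"
    "\<And>x y. x \<in> I \<Longrightarrow> y \<in> J \<Longrightarrow> P (x * y)"
  shows "P h"
proof -
  obtain ps where ps: "h = sum_list (map (\<lambda>(x, y). x * y) ps)" "set ps \<subseteq> I \<times> J"
    using assms(1) unfolding ideal_prod_def by blast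
  have "P (sum_list (map (\<lambda>(x, y). x * y) ps))" if "set ps \<subseteq> I \<times> J" for ps
    using that
  proof (induction ps)
    case Nil then show ?case using assms(2) by simp
  next
    case (Cons p ps)
    obtain a b where p: "p = (a, b)" by force
    then have "a \<in> I" "b \<in> J" using Cons.prems by auto
    then show ?case using Cons assms(3,4) p by simp
  qed
  then show ?thesis using ps by simp
qed

lemma ideal_prod_single: "x \<in> I \<Longrightarrow> y \<in> J \<Longrightarrow> x * y \<in> ideal_prod I J"
  unfolding ideal_prod_def
  by (rule CollectI, rule exI[of _ "[(x, y)]"]) simp

section \<open>Values\<close>

lemma vals_iff: "s \<in> vals A \<longleftrightarrow> (\<exists>f\<in>A. f \<noteq> 0 \<and> subdegree f = s)"
  unfolding vals_def by auto

lemma vals_add: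
  fixes R :: "('a::field) fps set"
  assumes sa: "k_subalgebra R" and "s \<in> vals R" "t \<in> vals R"
  shows "s + t \<in> vals R"
proof -
  obtain f where f: "f \<in> R" "f \<noteq> 0" "subdegree f = s"
    using assms(2) unfolding vals_iff by blast
  obtain g where g: "g \<in> R" "g \<noteq> 0" "subdegree g = t"
    using assms(3) unfolding vals_iff by blast
  have "f * g \<in> R" using sa_mult[OF sa f(1) g(1)] .
  moreover have "f * g \<noteq> 0" using f g by simp
  moreover have "subdegree (f * g) = s + t" using f g by simp
  ultimately show ?thesis unfolding vals_iff by blast
qed

lemma vals_mult:
  fixes R :: "('a::field) fps set"
  assumes sa: "k_subalgebra R" and "s \<in> vals R"
  shows "q * s \<in> vals R"
proof -
  obtain f where f: "f \<in> R" "f \<noteq> 0" "subdegree f = s"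
    using assms(2) unfolding vals_iff by blast
  have "f ^ q \<in> R" using sa_power[OF sa f(1)] .
  moreover have "f ^ q \<noteq> 0" using f by simp
  moreover have "subdegree (f ^ q) = q * s" using f by simp
  ultimately show ?thesis unfolding vals_iff by blast
qed

lemma vals_big:
  fixes R :: "('a::field) fps set"
  assumes cond: "\<forall>f. low N f \<longrightarrow> f \<in> R" and "N \<le> s"
  shows "s \<in> vals R"
proof -
  have sd: "subdegree ((fps_X :: 'a fps) ^ s) = s" by (rule fps_X_power_subdegree)
  have nz: "(fps_X :: 'a fps) ^ s \<noteq> 0" by simp
  have "low N ((fps_X :: 'a fps) ^ s)" using assms(2) sd unfolding low_subdegree by simp
  then have "(fps_X :: 'a fps) ^ s \<in> R" using cond by blast
  then show ?thesis unfolding vals_iff using sd nz by blast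
qed

lemma vals_max_ideal:
  fixes R :: "('a::field) fps set"
  assumes sa: "k_subalgebra R" and cond: "\<forall>f. low N f \<longrightarrow> f \<in> R"
  shows "vals (max_ideal R) = vals R - {0}"
proof -
  have "f \<in> max_ideal R \<and> f \<noteq> 0 \<longleftrightarrow> f \<in> R \<and> f \<noteq> 0 \<and> subdegree f \<noteq> 0" for f
    using max_ideal_char[OF sa cond, of f] subdegree_eq_0_iff[of f] by auto
  then have *: "\<And>f. (f \<in> max_ideal R \<and> f \<noteq> 0) = (f \<in> R \<and> f \<noteq> 0 \<and> subdegree f \<noteq> 0)" .
  show ?thesis
  proof (rule set_eqI)
    fix s
    show "s \<in> vals (max_ideal R) \<longleftrightarrow> s \<in> vals R - {0}"
    proof
      assume "s \<in> vals (max_ideal R)"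
      then obtain f where "f \<in> max_ideal R" "f \<noteq> 0" "subdegree f = s" unfolding vals_iff by blast
      moreover have "f \<in> R" "subdegree f \<noteq> 0" using *[of f] \<open>f \<in> max_ideal R\<close> \<open>f \<noteq> 0\<close> by auto
      ultimately have "s \<in> vals R" "s \<noteq> 0" unfolding vals_iff by blast+
      then show "s \<in> vals R - {0}" by blast
    next
      assume "s \<in> vals R - {0}"
      then have "s \<in> vals R" "s \<noteq> 0" by auto
      then obtain f where "f \<in> R" "f \<noteq> 0" "subdegree f = s" "s \<noteq> 0" unfolding vals_iff by blast
      moreover have "f \<in> max_ideal R" using *[of f] calculation by auto
      ultimately show "s \<in> vals (max_ideal R)" unfolding vals_iff by blast
    qed
  qed
qed

lemma X_power_compose:
  fixes x :: "'a::idom fps"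
  assumes "x $ 0 = 0" shows "fps_X ^ q oo x = x ^ q"
  by (induction q) (auto simp: fps_compose_mult_distrib[OF assms] assms)

lemma subdegree_compose:
  fixes x b :: "'a::idom fps"
  assumes x0: "x $ 0 = 0" and "x \<noteq> 0" "b \<noteq> 0"
  shows "subdegree (b oo x) = subdegree b * subdegree x"
proof -
  define d where "d = subdegree b"
  define u where "u = fps_shift d b"
  have "b = u * fps_X ^ d" unfolding u_def d_def by (rule subdegree_decompose)
  then have "b oo x = (u oo x) * x ^ d"
    using fps_compose_mult_distrib[OF x0, of u "fps_X ^ d"] X_power_compose[OF x0] by simp
  moreover have ux: "(u oo x) $ 0 \<noteq> 0" unfolding u_def d_def using assms by simp
  then have "u oo x \<noteq> 0" by (metis fps_zero_nth)
  moreover have "x ^ d \<noteq> 0" using assms by simp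
  ultimately have "subdegree (b oo x) = subdegree (u oo x) + subdegree (x ^ d)"
    by (simp add: subdegree_mult)
  also have "\<dots> = d * subdegree x" using ux by simp
  finally show ?thesis by (simp add: d_def)
qed




lemma low_Suc: "low j f \<Longrightarrow> f $ j = 0 \<Longrightarrow> low (Suc j) f"
  by (auto simp: low_def less_Suc_eq)

lemma subdegree_eq_from_low:
  assumes "low j f" "f $ j \<noteq> 0" shows "subdegree f = j"
proof -
  have "f \<noteq> 0" using assms(2) by auto
  then have "j \<le> subdegree f" using assms(1) low_subdegree by blast
  moreover have "subdegree f \<le> j" using assms(2) by (rule subdegree_leI)
  ultimately show ?thesis by simp
qed

lemma decomp:
  fixes R :: "('a::field) fps set"
  assumes sa: "k_subalgebra R" and x: "x \<in> R" "x \<noteq> 0" "subdegree x = w1" "0 < w1"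
    and below: "\<forall>s\<in>vals R. s < w2 \<longrightarrow> w1 dvd s"
    and h: "h \<in> R" "h $ 0 = 0"
  shows "\<exists>a. a $ 0 = 0 \<and> low w2 (h - (a oo x))"
proof -
  have x0: "x $ 0 = 0" using x by (intro nth_less_subdegree_zero) simp
  have xw: "x $ w1 \<noteq> 0" using x by auto
  have "j \<le> w2 \<longrightarrow> (\<exists>a. a $ 0 = 0 \<and> h - (a oo x) \<in> R \<and> low j (h - (a oo x)))" for j
  proof (induction j)
    case 0
    show ?case using h by (intro impI exI[of _ 0]) simp
  next
    case (Suc j)
    show ?case
    proof
      assume j: "Suc j \<le> w2"
      then obtain a where a: "a $ 0 = 0" "h - (a oo x) \<in> R" "low j (h - (a oo x))"
        using Suc.IH by auto
      define g where "g = h - (a oo x)"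
      define e where "e = g $ j"
      show "\<exists>a. a $ 0 = 0 \<and> h - (a oo x) \<in> R \<and> low (Suc j) (h - (a oo x))"
      proof (cases "e = 0")
        case True
        then show ?thesis using a low_Suc[of j g] unfolding e_def g_def by blast
      next
        case False
        have g0: "g $ 0 = 0" unfolding g_def using a h by simp
        have sd: "subdegree g = j" using subdegree_eq_from_low[of j g] a False
          unfolding g_def e_def by blast
        have "g \<noteq> 0" using False unfolding e_def by auto
        then have "j \<in> vals R" using a(2) sd unfolding vals_iff g_def by blast
        then have "w1 dvd j" using below j by auto
        then obtain q where q: "j = q * w1" by (metis dvdE mult.commute)
        have "j \<noteq> 0" using g0 False unfolding e_def by (metis)
        then have q0: "0 < q" using q by simp
        define c where "c = e / (x $ w1) ^ q"
        define a' where "a' = a + fps_const c * fps_X ^ q"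
        have a'0: "a' $ 0 = 0" unfolding a'_def using a q0 by simp
        have comp: "a' oo x = (a oo x) + fps_const c * x ^ q"
          unfolding a'_def fps_compose_add_distrib
          by (simp add: fps_const_mult_apply_left[symmetric] X_power_compose[OF x0])
        have eq: "h - (a' oo x) = g - fps_const c * x ^ q" unfolding comp g_def by simp
        have inR: "h - (a' oo x) \<in> R" unfolding eq g_def
          using a(2) sa x by (auto intro!: sa_diff sa_mult sa_const sa_power)
        have "low (Suc j) (g - fps_const c * x ^ q)"
          unfolding low_def
        proof (intro allI impI)
          fix i assume "i < Suc j"
          then consider "i < j" | "i = j" by linarith
          then show "(g - fps_const c * x ^ q) $ i = 0"
          proof cases
            case 1
            then have "(x ^ q) $ i = 0" using q x by (intro fps_pow_nth_below_subdegree) (simp add: mult.commute)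
            then show ?thesis using 1 a(3) unfolding g_def low_def by simp
          next
            case 2
            have "(x ^ q) $ (q * subdegree x) = (x $ subdegree x) ^ q" by (rule fps_pow_base)
            then have "(x ^ q) $ j = (x $ w1) ^ q" using q x by simp
            moreover have "(x $ w1) ^ q \<noteq> 0" using xw by simp
            ultimately show ?thesis using 2 unfolding c_def e_def by simp
          qed
        qed
        then show ?thesis using a'0 inR eq by metis
      qed
    qed
  qed
  then show ?thesis by blast
qed




lemma m2_decomp:
  fixes R :: "('a::field) fps set"
  assumes sa: "k_subalgebra R" and cond: "\<forall>f. low N f \<longrightarrow> f \<in> R"
    and x: "x \<in> R" "x \<noteq> 0" "subdegree x = w1" "0 < w1" and w2: "0 < w2"
    and below: "\<forall>s\<in>vals R. s < w2 \<longrightarrow> w1 dvd s"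
    and f: "f \<in> ideal_prod (max_ideal R) (max_ideal R)"
  shows "\<exists>b. low (Suc w2) (f - (b oo x))"
proof -
  have x0: "x $ 0 = 0" using x by (intro nth_less_subdegree_zero) simp
  have dm: "\<exists>a. a $ 0 = 0 \<and> low w2 (h - (a oo x))" if "h \<in> max_ideal R" for h
    using that max_ideal_char[OF sa cond] decomp[OF sa x below] by blast
  show ?thesis
  proof (rule ideal_prod_induct[OF f])
    show "\<exists>b. low (Suc w2) (0 - (b oo x))" by (intro exI[of _ 0]) simp
  next
    fix f g assume "\<exists>b. low (Suc w2) (f - (b oo x))" "\<exists>b. low (Suc w2) (g - (b oo x))"
    then obtain b b' where b: "low (Suc w2) (f - (b oo x))" "low (Suc w2) (g - (b' oo x))" by blast
    have "f + g - ((b + b') oo x) = (f - (b oo x)) + (g - (b' oo x))"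
      by (simp add: fps_compose_add_distrib algebra_simps)
    then show "\<exists>b. low (Suc w2) (f + g - (b oo x))" using low_add[OF b] by metis
  next
    fix h h' assume hm: "h \<in> max_ideal R" "h' \<in> max_ideal R"
    obtain a where a: "a $ 0 = 0" "low w2 (h - (a oo x))" using dm hm(1) by blast
    obtain a' where a': "a' $ 0 = 0" "low w2 (h' - (a' oo x))" using dm hm(2) by blast
    define A where "A = a oo x"
    define A' where "A' = a' oo x"
    define r where "r = h - A"
    define r' where "r' = h' - A'"
    have lA: "low 1 A" "low 1 A'" unfolding A_def A'_def low_def using a a' by auto
    have e: "h * h' - ((a * a') oo x) = A * r' + r * A' + r * r'"
      unfolding fps_compose_mult_distrib[OF x0] r_def r'_def A_def[symmetric] A'_def[symmetric]
      by (simp add: algebra_simps)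
    have "low (1 + w2) (A * r')" using low_mult[OF lA(1), of w2 r'] a' unfolding r'_def A'_def by simp
    moreover have "low (w2 + 1) (r * A')" using low_mult[OF _ lA(2), of w2 r] a unfolding r_def A_def by simp
    moreover have "low (w2 + w2) (r * r')" using low_mult[of w2 r w2 r'] a a' unfolding r_def A_def r'_def A'_def by simp
    ultimately have "low (Suc w2) (A * r' + r * A' + r * r')" using w2
      by (intro low_add) (auto elim: low_mono)
    then show "\<exists>b. low (Suc w2) (h * h' - (b oo x))" using e by metis
  qed
qed

lemma w2_not_in_m2:
  fixes R :: "('a::field) fps set"
  assumes sa: "k_subalgebra R" and cond: "\<forall>f. low N f \<longrightarrow> f \<in> R"
    and x: "x \<in> R" "x \<noteq> 0" "subdegree x = w1" "0 < w1" and w2: "0 < w2"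
    and below: "\<forall>s\<in>vals R. s < w2 \<longrightarrow> w1 dvd s" and nd: "\<not> w1 dvd w2"
  shows "w2 \<notin> vals (ideal_prod (max_ideal R) (max_ideal R))"
proof
  assume "w2 \<in> vals (ideal_prod (max_ideal R) (max_ideal R))"
  then obtain f where f: "f \<in> ideal_prod (max_ideal R) (max_ideal R)" "f \<noteq> 0" "subdegree f = w2"
    unfolding vals_iff by blast
  obtain b where b: "low (Suc w2) (f - (b oo x))" using m2_decomp[OF sa cond x w2 below f(1)] by blast
  have x0: "x $ 0 = 0" using x by (intro nth_less_subdegree_zero) simp
  have eqi: "(b oo x) $ i = f $ i" if "i \<le> w2" for i
    using b that unfolding low_def by auto
  have "f $ w2 \<noteq> 0" using f(2,3) nth_subdegree_nonzero[of f] by simp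
  then have "(b oo x) $ w2 \<noteq> 0" using eqi[of w2] by simp
  moreover have "low w2 (b oo x)" unfolding low_def using eqi f by auto
  ultimately have sd: "subdegree (b oo x) = w2" by (rule subdegree_eq_from_low[rotated])
  have "b oo x \<noteq> 0" using \<open>(b oo x) $ w2 \<noteq> 0\<close> by (metis fps_zero_nth)
  then have "b \<noteq> 0" by auto
  then have "subdegree (b oo x) = subdegree b * w1" using subdegree_compose[OF x0 x(2)] x by simp
  then show False using sd nd by (metis dvd_triv_right)
qed

lemma m_low:
  fixes R :: "('a::field) fps set"
  assumes sa: "k_subalgebra R" and cond: "\<forall>f. low N f \<longrightarrow> f \<in> R"
    and w1min: "\<forall>s\<in>vals R. 0 < s \<longrightarrow> w1 \<le> s"
    and h: "h \<in> max_ideal R"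
  shows "low w1 h"
proof (cases "h = 0")
  case True then show ?thesis by simp
next
  case False
  have "h \<in> R" "h $ 0 = 0" using h max_ideal_char[OF sa cond] by auto
  moreover have "subdegree h \<noteq> 0" using False \<open>h $ 0 = 0\<close> subdegree_eq_0_iff[of h] by blast
  ultimately have "subdegree h \<in> vals R" "0 < subdegree h" using False unfolding vals_iff
    by auto
  then have "w1 \<le> subdegree h" using w1min by blast
  then show ?thesis using low_subdegree[of w1 h] by simp
qed

lemma w1_not_in_m2:
  fixes R :: "('a::field) fps set"
  assumes sa: "k_subalgebra R" and cond: "\<forall>f. low N f \<longrightarrow> f \<in> R"
    and w1min: "\<forall>s\<in>vals R. 0 < s \<longrightarrow> w1 \<le> s" and w1: "0 < w1"
  shows "w1 \<notin> vals (ideal_prod (max_ideal R) (max_ideal R))"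
proof
  assume "w1 \<in> vals (ideal_prod (max_ideal R) (max_ideal R))"
  then obtain f where f: "f \<in> ideal_prod (max_ideal R) (max_ideal R)" "f \<noteq> 0" "subdegree f = w1"
    unfolding vals_iff by blast
  have "low (w1 + w1) f"
  proof (rule ideal_prod_induct[OF f(1)])
    show "low (w1 + w1) 0" by simp
  next
    fix a b :: "'a fps" assume "low (w1 + w1) a" "low (w1 + w1) b"
    then show "low (w1 + w1) (a + b)" by (rule low_add)
  next
    fix a b assume "a \<in> max_ideal R" "b \<in> max_ideal R"
    then show "low (w1 + w1) (a * b)" using m_low[OF sa cond w1min] low_mult by blast
  qed
  then have "w1 + w1 \<le> subdegree f" using f(2) low_subdegree[of "w1 + w1" f] by simp
  then show False using f(3) w1 by simp
qed

lemma HK_sub_MG: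
  fixes R :: "('a::field) fps set"
  assumes sa: "k_subalgebra R" and cond: "\<forall>f. low N f \<longrightarrow> f \<in> R"
  shows "HK_set R \<subseteq> min_gens (vals R)"
proof
  fix s assume s: "s \<in> HK_set R"
  then have s1: "s \<in> vals R - {0}" "s \<notin> vals (ideal_prod (max_ideal R) (max_ideal R))"
    unfolding HK_set_def vals_max_ideal[OF sa cond] by auto
  have "\<not> (\<exists>x\<in>vals R. \<exists>y\<in>vals R. 0 < x \<and> 0 < y \<and> s = x + y)"
  proof
    assume "\<exists>x\<in>vals R. \<exists>y\<in>vals R. 0 < x \<and> 0 < y \<and> s = x + y"
    then obtain a b where ab: "a \<in> vals R" "b \<in> vals R" "0 < a" "0 < b" "s = a + b" by blast
    obtain f where f: "f \<in> R" "f \<noteq> 0" "subdegree f = a" using ab unfolding vals_iff by blast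
    obtain g where g: "g \<in> R" "g \<noteq> 0" "subdegree g = b" using ab unfolding vals_iff by blast
    have "f $ 0 = 0" "g $ 0 = 0" using f g ab by (auto intro: nth_less_subdegree_zero)
    then have "f \<in> max_ideal R" "g \<in> max_ideal R" using f g max_ideal_char[OF sa cond] by auto
    then have "f * g \<in> ideal_prod (max_ideal R) (max_ideal R)" by (rule ideal_prod_single)
    moreover have "f * g \<noteq> 0" "subdegree (f * g) = s" using f g ab by auto
    ultimately show False using s1(2) unfolding vals_iff by blast
  qed
  then show "s \<in> min_gens (vals R)" using s1 unfolding min_gens_def by auto
qed

lemma MG_sub_HK:
  fixes R :: "('a::field) fps set"
  assumes sa: "k_subalgebra R" and cond: "\<forall>f. low N f \<longrightarrow> f \<in> R"
    and sr: "R = semigroup_ring (vals R)"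
  shows "min_gens (vals R) \<subseteq> HK_set R"
proof
  fix s assume s: "s \<in> min_gens (vals R)"
  define S where "S = vals R"
  have sS: "s \<in> S" "0 < s" "\<not> (\<exists>x\<in>S. \<exists>y\<in>S. 0 < x \<and> 0 < y \<and> s = x + y)"
    using s unfolding min_gens_def S_def by auto
  have supp: "i \<in> S \<and> 0 < i" if "g \<in> max_ideal R" "g $ i \<noteq> 0" for g i
  proof -
    have "g \<in> R" "g $ 0 = 0" using that max_ideal_char[OF sa cond] by auto
    then have "g \<in> semigroup_ring S" using sr S_def by simp
    then have "i \<in> S" using that unfolding semigroup_ring_def by blast
    moreover have "i \<noteq> 0"
    proof
      assume "i = 0" then show False using \<open>g $ 0 = 0\<close> that(2) by simp
    qed
    ultimately show ?thesis by simp
  qed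
  have "s \<notin> vals (ideal_prod (max_ideal R) (max_ideal R))"
  proof
    assume "s \<in> vals (ideal_prod (max_ideal R) (max_ideal R))"
    then obtain f where f: "f \<in> ideal_prod (max_ideal R) (max_ideal R)" "f \<noteq> 0" "subdegree f = s"
      unfolding vals_iff by blast
    have "\<forall>i. f $ i \<noteq> 0 \<longrightarrow> (\<exists>x\<in>S. \<exists>y\<in>S. 0 < x \<and> 0 < y \<and> i = x + y)"
    proof (rule ideal_prod_induct[OF f(1)])
      show "\<forall>i. (0::'a fps) $ i \<noteq> 0 \<longrightarrow> (\<exists>x\<in>S. \<exists>y\<in>S. 0 < x \<and> 0 < y \<and> i = x + y)" by simp
    next
      fix a b :: "'a fps"
      assume "\<forall>i. a $ i \<noteq> 0 \<longrightarrow> (\<exists>x\<in>S. \<exists>y\<in>S. 0 < x \<and> 0 < y \<and> i = x + y)"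
        "\<forall>i. b $ i \<noteq> 0 \<longrightarrow> (\<exists>x\<in>S. \<exists>y\<in>S. 0 < x \<and> 0 < y \<and> i = x + y)"
      note ih = this
      show "\<forall>i. (a + b) $ i \<noteq> 0 \<longrightarrow> (\<exists>x\<in>S. \<exists>y\<in>S. 0 < x \<and> 0 < y \<and> i = x + y)"
      proof (intro allI impI)
        fix i assume "(a + b) $ i \<noteq> 0"
        then have "a $ i \<noteq> 0 \<or> b $ i \<noteq> 0" by auto
        then show "\<exists>x\<in>S. \<exists>y\<in>S. 0 < x \<and> 0 < y \<and> i = x + y" using ih by blast
      qed
    next
      fix a b assume ab: "a \<in> max_ideal R" "b \<in> max_ideal R"
      show "\<forall>i. (a * b) $ i \<noteq> 0 \<longrightarrow> (\<exists>x\<in>S. \<exists>y\<in>S. 0 < x \<and> 0 < y \<and> i = x + y)"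
      proof (intro allI impI)
        fix i assume "(a * b) $ i \<noteq> 0"
        then have "(\<Sum>j=0..i. a$j * b$(i - j)) \<noteq> 0" by (simp add: fps_mult_nth)
        have "\<exists>j\<in>{0..i}. a$j * b$(i - j) \<noteq> 0"
        proof (rule ccontr)
          assume "\<not> (\<exists>j\<in>{0..i}. a$j * b$(i - j) \<noteq> 0)"
          then have "(\<Sum>j=0..i. a$j * b$(i - j)) = 0" by (intro sum.neutral) blast
          then show False using \<open>(\<Sum>j=0..i. a$j * b$(i - j)) \<noteq> 0\<close> by simp
        qed
        then obtain j where j: "j \<in> {0..i}" "a$j * b$(i - j) \<noteq> 0" by blast
        then have "a $ j \<noteq> 0" "b $ (i - j) \<noteq> 0" by auto
        then have "j \<in> S" "0 < j" "i - j \<in> S" "0 < i - j" using supp ab by blast+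
        moreover have "i = j + (i - j)" using j by auto
        ultimately show "\<exists>x\<in>S. \<exists>y\<in>S. 0 < x \<and> 0 < y \<and> i = x + y" by blast
      qed
    qed
    moreover have "f $ s \<noteq> 0" using f(2,3) nth_subdegree_nonzero[of f] by simp
    ultimately have "\<exists>x\<in>S. \<exists>y\<in>S. 0 < x \<and> 0 < y \<and> s = x + y" by blast
    then show False using sS(3) by blast
  qed
  moreover have "s \<in> vals (max_ideal R)" using sS vals_max_ideal[OF sa cond] S_def by auto
  ultimately show "s \<in> HK_set R" unfolding HK_set_def by blast
qed




lemma R_univ:
  fixes R :: "('a::field) fps set"
  assumes sa: "k_subalgebra R" and cond: "\<forall>f. low N f \<longrightarrow> f \<in> R"
    and x: "x \<in> R" "x \<noteq> 0" "subdegree x = 1"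
  shows "h \<in> R"
proof -
  have xw: "x $ 1 \<noteq> 0" using x nth_subdegree_nonzero[of x] by simp
  have "\<exists>q\<in>R. low j (h - q)" for j
  proof (induction j)
    case 0 then show ?case using sa_0[OF sa] by auto
  next
    case (Suc j)
    then obtain q where q: "q \<in> R" "low j (h - q)" by blast
    define g where "g = h - q"
    define c where "c = g $ j / (x $ 1) ^ j"
    define q' where "q' = q + fps_const c * x ^ j"
    have "q' \<in> R" unfolding q'_def using sa q x by (auto intro!: sa_add sa_mult sa_const sa_power)
    moreover have "h - q' = g - fps_const c * x ^ j" unfolding q'_def g_def by simp
    moreover have "low (Suc j) (g - fps_const c * x ^ j)"
      unfolding low_def
    proof (intro allI impI)
      fix i assume "i < Suc j"
      then consider "i < j" | "i = j" by linarith
      then show "(g - fps_const c * x ^ j) $ i = 0"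
      proof cases
        case 1
        then have "(x ^ j) $ i = 0" using x by (intro fps_pow_nth_below_subdegree) simp
        then show ?thesis using 1 q(2) unfolding g_def low_def by simp
      next
        case 2
        have "(x ^ j) $ (j * subdegree x) = (x $ subdegree x) ^ j" by (rule fps_pow_base)
        then have "(x ^ j) $ j = (x $ 1) ^ j" using x by simp
        moreover have "(x $ 1) ^ j \<noteq> 0" using xw by simp
        ultimately show ?thesis using 2 unfolding c_def by simp
      qed
    qed
    ultimately have "q' \<in> R \<and> low (Suc j) (h - q')" by simp
    then show ?case by blast
  qed
  then obtain q where "q \<in> R" "low N (h - q)" by blast
  then have "h - q \<in> R" "q \<in> R" using cond by auto
  then have "(h - q) + q \<in> R" using sa_add[OF sa] by blast
  then show ?thesis by simp
qed

lemma comb2: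
  fixes fs :: "('a::field) fps list"
  assumes "2 \<le> n"
  shows "(\<Sum>i<n. fps_const ((c0 # c1 # replicate (n - 2) 0) ! i) * fs ! i) = fps_const c0 * fs ! 0 + fps_const c1 * fs ! 1"
proof -
  define k where "k = n - 2"
  have n: "n = Suc (Suc k)" using assms unfolding k_def by simp
  have "(\<Sum>i<k. fps_const ((c0 # c1 # replicate k 0) ! Suc (Suc i)) * fs ! Suc (Suc i)) = 0"
    by (intro sum.neutral) simp
  then show ?thesis unfolding n sum.lessThan_Suc_shift by simp
qed

lemma edim_contra:
  fixes R :: "('a::field) fps set"
  assumes sa: "k_subalgebra R" and cond: "\<forall>f. low N f \<longrightarrow> f \<in> R"
    and univ: "\<And>h. h \<in> R" and ed: "has_edim R n" and n: "2 \<le> n"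
  shows False
proof -
  define m where "m = max_ideal R"
  define m2 where "m2 = ideal_prod m m"
  have mchar: "f \<in> m \<longleftrightarrow> f $ 0 = 0" for f
    unfolding m_def using max_ideal_char[OF sa cond] univ by blast
  have m2I: "f \<in> m2" if "f $ 0 = 0" "f $ 1 = 0" for f
  proof -
    have "f = fps_X * fps_shift 1 f"
    proof (rule fps_ext)
      fix k show "f $ k = (fps_X * fps_shift 1 f) $ k"
        using that by (cases k) auto
    qed
    moreover have "fps_X \<in> m" "fps_shift 1 f \<in> m" using mchar that by auto
    ultimately show ?thesis unfolding m2_def using ideal_prod_single[of fps_X m "fps_shift 1 f" m] by simp
  qed
  obtain fs :: "'a fps list" where fs: "length fs = n" "set fs \<subseteq> m"
    and ind: "\<And>cs :: 'a list. length cs = n \<Longrightarrow>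
            (\<Sum>i<n. fps_const (cs ! i) * fs ! i) \<in> m2 \<Longrightarrow> (\<forall>i<n. cs ! i = 0)"
    using ed unfolding has_edim_def Let_def m_def m2_def by blast
  have f0: "fs ! 0 \<in> m" "fs ! 1 \<in> m" using fs n by (auto intro!: nth_mem[THEN subsetD[OF fs(2)]])
  then have z: "fs ! 0 $ 0 = 0" "fs ! 1 $ 0 = 0" using mchar by auto
  define a where "a = fs ! 0 $ 1"
  define b where "b = fs ! 1 $ 1"
  have l: "length (c0 # c1 # replicate (n - 2) (0::'a)) = n" for c0 c1 using n by simp
  have "fps_const b * fs ! 0 + fps_const (- a) * fs ! 1 \<in> m2"
    using z by (intro m2I) (simp_all add: a_def b_def mult.commute)
  then have "\<forall>i<n. (b # (- a) # replicate (n - 2) 0) ! i = 0"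
    using ind[OF l, of b "- a"] comb2[OF n, of b "- a" fs] by simp
  note allz = this[rule_format]
  have "(b # (- a) # replicate (n - 2) 0) ! 0 = 0" "(b # (- a) # replicate (n - 2) 0) ! 1 = 0"
    using allz[of 0] allz[of 1] n by linarith+
  then have ab: "b = 0" "a = 0" by simp_all
  have "fps_const 1 * fs ! 0 + fps_const 0 * fs ! 1 \<in> m2"
    using z ab by (intro m2I) (simp_all add: a_def)
  then have "\<forall>i<n. ((1::'a) # 0 # replicate (n - 2) 0) ! i = 0"
    using ind[OF l, of 1 0] comb2[OF n, of 1 0 fs] by simp
  note allz2 = this[rule_format]
  have "((1::'a) # 0 # replicate (n - 2) 0) ! 0 = 0" using allz2[of 0] n by linarith
  then show False by simp
qed

lemma sorted2:
  fixes A :: "nat set"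
  assumes "finite A" "p \<in> A" "q \<in> A" "p < q" "\<forall>g\<in>A. p \<le> g" "\<forall>g\<in>A. g \<noteq> p \<longrightarrow> q \<le> g"
  shows "1 < length (sorted_list_of_set A) \<and> sorted_list_of_set A ! 0 = p \<and> sorted_list_of_set A ! 1 = q"
proof -
  have mp: "Min A = p" using assms by (intro Min_eqI) auto
  have A1: "finite (A - {p})" "A - {p} \<noteq> {}" using assms by auto
  have mq: "Min (A - {p}) = q" using assms by (intro Min_eqI) auto
  have "sorted_list_of_set A = p # sorted_list_of_set (A - {p})"
    using sorted_list_of_set_nonempty[of A] assms mp by auto
  also have "sorted_list_of_set (A - {p}) = q # sorted_list_of_set (A - {p} - {q})"
    using sorted_list_of_set_nonempty[OF A1] mq by simp
  finally show ?thesis by simp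
qed




theorem mainTheorem5:
  fixes R :: "('a::field) fps set" and n :: nat
  assumes "k_subalgebra R"
    and "normalization_finite R"
    and "birational R"
    and "has_edim R n"
    and "2 \<le> n"
  shows "let a = sorted_list_of_set (HK_set R);
             w = sorted_list_of_set (min_gens (vals R))
         in 1 < length a \<and> a ! 0 = w ! 0 \<and> a ! 1 = w ! 1 \<and> set a \<subseteq> set w \<and>
            (R = semigroup_ring (vals R) \<longrightarrow> set a = set w)"
proof -
  note sa = assms(1)
  obtain N where cond: "\<forall>f. low N f \<longrightarrow> f \<in> R" using conductor[OF assms(1-3)] by blast
  define S where "S = vals R"
  have big: "s \<in> S" if "N \<le> s" for s using vals_big[OF cond that] S_def by simp
  define w1 where "w1 = (LEAST s. s \<in> S \<and> 0 < s)"
  have ex1: "N + 1 \<in> S \<and> 0 < N + 1" using big by simp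
  have w1S: "w1 \<in> S" "0 < w1" using LeastI[of "\<lambda>s. s \<in> S \<and> 0 < s", OF ex1] unfolding w1_def by auto
  have w1min: "\<forall>s\<in>S. 0 < s \<longrightarrow> w1 \<le> s" unfolding w1_def by (auto intro: Least_le)
  obtain x where x: "x \<in> R" "x \<noteq> 0" "subdegree x = w1" using w1S unfolding S_def vals_iff by blast
  have w1ne: "w1 \<noteq> 1"
  proof
    assume "w1 = 1"
    then have "\<And>h. h \<in> R" using R_univ[OF sa cond x(1,2)] x(3) by simp
    then show False using edim_contra[OF sa cond _ assms(4,5)] by blast
  qed
  then have w1two: "2 \<le> w1" using w1S by linarith
  define w2 where "w2 = (LEAST s. s \<in> S \<and> \<not> w1 dvd s)"
  define s0 where "s0 = (N + 1) * w1 + 1"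
  have "\<not> w1 dvd s0"
  proof
    assume "w1 dvd s0"
    have d2: "w1 dvd (N + 1) * w1" by simp
    have "w1 dvd s0 - (N + 1) * w1" by (rule dvd_diff_nat[OF \<open>w1 dvd s0\<close> d2])
    moreover have "s0 - (N + 1) * w1 = 1" unfolding s0_def by simp
    ultimately have "w1 dvd 1" by simp
    then show False using w1two by simp
  qed
  moreover have "s0 \<in> S"
  proof (rule big)
    have "(N + 1) * 1 \<le> (N + 1) * w1" using w1S(2) by (intro mult_le_mono2) simp
    then show "N \<le> s0" unfolding s0_def by simp
  qed
  ultimately have ex2: "s0 \<in> S \<and> \<not> w1 dvd s0" by simp
  have w2S: "w2 \<in> S" "\<not> w1 dvd w2" using LeastI[of "\<lambda>s. s \<in> S \<and> \<not> w1 dvd s", OF ex2] unfolding w2_def by auto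
  have below: "\<forall>s\<in>S. s < w2 \<longrightarrow> w1 dvd s" unfolding w2_def using not_less_Least by blast
  have w2pos: "0 < w2"
  proof (rule ccontr)
    assume "\<not> 0 < w2" then have "w2 = 0" by simp
    then show False using w2S by simp
  qed
  have "w1 \<le> w2" using w1min w2S(1) w2pos by blast
  moreover have "w1 \<noteq> w2" using w2S(2) by auto
  ultimately have w12: "w1 < w2" by simp
  define MG where "MG = min_gens S"
  have MGi: "g \<in> MG \<longleftrightarrow> g \<in> S \<and> 0 < g \<and> \<not> (\<exists>x\<in>S. \<exists>y\<in>S. 0 < x \<and> 0 < y \<and> g = x + y)" for g
    unfolding MG_def min_gens_def by simp
  have w1MG: "w1 \<in> MG" unfolding MGi using w1S w1min by fastforce
  have w2MG: "w2 \<in> MG"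
  proof -
    have "\<not> (\<exists>x\<in>S. \<exists>y\<in>S. 0 < x \<and> 0 < y \<and> w2 = x + y)"
    proof
      assume "\<exists>x\<in>S. \<exists>y\<in>S. 0 < x \<and> 0 < y \<and> w2 = x + y"
      then obtain a b where ab: "a \<in> S" "b \<in> S" "0 < a" "0 < b" "w2 = a + b" by blast
      then have "w1 dvd a" "w1 dvd b" using below by auto
      then have "w1 dvd w2" using ab(5) by simp
      then show False using w2S by simp
    qed
    then show ?thesis unfolding MGi using w2S w2pos by blast
  qed
  have MGge1: "\<forall>g\<in>MG. w1 \<le> g" using w1min MGi by blast
  have MGge2: "\<forall>g\<in>MG. g \<noteq> w1 \<longrightarrow> w2 \<le> g"
  proof (intro ballI impI)
    fix g assume g: "g \<in> MG" "g \<noteq> w1"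
    show "w2 \<le> g"
    proof (rule ccontr)
      assume "\<not> w2 \<le> g"
      then have "w1 dvd g" using below g MGi by auto
      then obtain k where k: "g = w1 * k" by (rule dvdE)
      have "w1 \<le> g" using g MGge1 by blast
      have "k \<noteq> 0" using k \<open>w1 \<le> g\<close> w1S(2) by auto
      moreover have "k \<noteq> 1" using k g(2) by auto
      ultimately have "2 \<le> k" by linarith
      define y where "y = (k - 1) * w1"
      have "y \<in> S" unfolding y_def S_def using vals_mult[OF sa, of w1 "k - 1"] w1S S_def by simp
      moreover have "0 < y" unfolding y_def using \<open>2 \<le> k\<close> w1S by simp
      moreover have "g = w1 + y" unfolding y_def k using \<open>2 \<le> k\<close>
        by (cases k) (auto simp: algebra_simps)
      ultimately show False using g(1) w1S unfolding MGi by blast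
    qed
  qed
  have MGfin: "finite MG"
  proof (rule finite_subset[of _ "{..< N + w1 + 1}"])
    show "MG \<subseteq> {..< N + w1 + 1}"
    proof
      fix g assume g: "g \<in> MG"
      show "g \<in> {..< N + w1 + 1}"
      proof (rule ccontr)
        assume "g \<notin> {..< N + w1 + 1}"
        then have "N + w1 + 1 \<le> g" by simp
        then have "g - w1 \<in> S" "0 < g - w1" "g = w1 + (g - w1)" using big w1S by auto
        then show False using g w1S unfolding MGi by blast
      qed
    qed
  qed simp
  define HK where "HK = HK_set R"
  have HKsub: "HK \<subseteq> MG" unfolding HK_def MG_def S_def by (rule HK_sub_MG[OF sa cond])
  have HKfin: "finite HK" using HKsub MGfin finite_subset by blast
  have vm: "vals (max_ideal R) = S - {0}" unfolding S_def by (rule vals_max_ideal[OF sa cond])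
  have w1min': "\<forall>s\<in>vals R. 0 < s \<longrightarrow> w1 \<le> s" using w1min S_def by simp
  have below': "\<forall>s\<in>vals R. s < w2 \<longrightarrow> w1 dvd s" using below S_def by simp
  have w1HK: "w1 \<in> HK" unfolding HK_def HK_set_def vm
    using w1S w1_not_in_m2[OF sa cond w1min' w1S(2)] by simp
  have w2HK: "w2 \<in> HK" unfolding HK_def HK_set_def vm
    using w2S w2pos w2_not_in_m2[OF sa cond x w1S(2) w2pos below' w2S(2)] by simp
  have A: "1 < length (sorted_list_of_set HK) \<and> sorted_list_of_set HK ! 0 = w1 \<and> sorted_list_of_set HK ! 1 = w2"
    using sorted2[OF HKfin w1HK w2HK w12] MGge1 MGge2 HKsub by blast
  have B: "1 < length (sorted_list_of_set MG) \<and> sorted_list_of_set MG ! 0 = w1 \<and> sorted_list_of_set MG ! 1 = w2"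
    using sorted2[OF MGfin w1MG w2MG w12] MGge1 MGge2 by blast
  have C: "R = semigroup_ring S \<longrightarrow> HK = MG"
  proof
    assume "R = semigroup_ring S"
    then have "R = semigroup_ring (vals R)" unfolding S_def .
    then have "MG \<subseteq> HK" unfolding MG_def HK_def S_def by (rule MG_sub_HK[OF sa cond])
    then show "HK = MG" using HKsub by blast
  qed
  show ?thesis unfolding Let_def HK_def[symmetric] S_def[symmetric] MG_def[symmetric]
    using A B C HKsub HKfin MGfin by simp
qed


end
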